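(* If $P$ is an $n\times n$ sign pattern all of whose entries are nonzero (i.e., $+$ or $-$) and $\mathcal{Q}(P)$ contains a nilpotent matrix, then $P$ is a spectrally arbitrary pattern.
   Context: A sign pattern is an array with entries in $\{+,-,0\}$; its qualitative class $\mathcal{Q}(P)$ is the set of real matrices of the same size whose entries have the signs prescribed by $P$. An $n\times n$ sign pattern $P$ is spectrally arbitrary if for every monic real polynomial $p$ of degree $n$ there is $A\in\mathcal{Q}(P)$ with characteristic polynomial $p$. *)

theory Defs
  imports "Jordan_Normal_Form.Jordan_Normal_Form"
begin

definition sign_pattern :: "nat \<Rightarrow> int mat \<Rightarrow> bool" where
  "sign_pattern n P \<longleftrightarrow> P \<in> carrier_mat n n \<and>
     (\<forall>i<n. \<forall>j<n. P $$ (i,j) \<in> {-1, 0, 1})"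

definition qual_class :: "int mat \<Rightarrow> real mat set" where
  "qual_class P = {A. A \<in> carrier_mat (dim_row P) (dim_col P) \<and>
     (\<forall>i<dim_row P. \<forall>j<dim_col P. sgn (A $$ (i,j)) = of_int (P $$ (i,j)))}"

definition nilpotent_mat :: "real mat \<Rightarrow> bool" where
  "nilpotent_mat A \<longleftrightarrow> (\<exists>k. A ^\<^sub>m k = 0\<^sub>m (dim_row A) (dim_col A))"

definition spectrally_arbitrary :: "nat \<Rightarrow> int mat \<Rightarrow> bool" where
  "spectrally_arbitrary n P \<longleftrightarrow>
     (\<forall>p :: real poly. monic p \<and> degree p = n \<longrightarrow>
        (\<exists>A \<in> qual_class P. char_poly A = p))"

end

theory Submission imports Defs "HOL-Computational_Algebra.Field_as_Ring" "Jordan_Normal_Form.Jordan_Normal_Form_Existence" begin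


lemma deg0_monic: fixes p :: "real poly" assumes "degree p = 0" "lead_coeff p = 1" shows "p = 1"
  using assms by (metis degree_0_id one_pCons)

lemma dvd_xpow_monic:
  fixes p :: "real poly"
  assumes "p dvd [:0,1:] ^ m" "lead_coeff p = 1"
  shows "p = [:0,1:] ^ degree p"
  using assms
proof (induction m arbitrary: p)
  case 0
  then have "is_unit p" by simp
  then have "degree p = 0" by (simp add: is_unit_iff_degree)
  then show ?case using 0 using deg0_monic by simp
next
  case (Suc m)
  have px: "prime_elem ([:0,1:] :: real poly)" by (rule prime_elem_linear_field_poly) simp
  show ?case
  proof (cases "[:0,1:] dvd p")
    case True
    then obtain q where q: "p = [:0,1:] * q" by (elim dvdE)
    have "q \<noteq> 0" using Suc.prems(2) unfolding q by auto
    have "q dvd [:0,1:] ^ m"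
    proof -
      have "[:0,1:] * q dvd [:0,1:] * [:0,1:] ^ m" using Suc.prems(1) unfolding q power_Suc .
      then show ?thesis by (subst (asm) dvd_mult_cancel_left) simp
    qed
    moreover have "lead_coeff q = 1" using Suc.prems(2) unfolding q lead_coeff_mult by simp
    ultimately have qq: "q = [:0,1:] ^ degree q" using Suc.IH by blast
    define d where "d = degree q"
    have qd: "q = [:0,1:] ^ d" using qq unfolding d_def .
    have pd: "p = [:0,1:] ^ Suc d" unfolding q qd by simp
    have "degree p = Suc d" unfolding pd by (simp add: degree_power_eq)
    then show ?thesis using pd by simp
  next
    case False
    have "coprime p ([:0,1:] ^ Suc m)" using prime_elem_imp_power_coprime[OF px False] .
    then have "is_unit p" using Suc.prems(1) coprime_absorb_left by blast
    then have "degree p = 0" by (simp add: is_unit_iff_degree)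
    then show ?thesis using Suc.prems using deg0_monic by simp
  qed
qed

fun nB :: "'a::comm_ring_1 poly mat \<Rightarrow> nat \<Rightarrow> nat \<Rightarrow> 'a poly mat" where
  "nB M n 0 = 0\<^sub>m n n"
| "nB M n (Suc k) = [:0,1:] \<cdot>\<^sub>m nB M n k + M ^\<^sub>m k"

lemma nB_carrier: "M \<in> carrier_mat n n \<Longrightarrow> nB M n k \<in> carrier_mat n n"
  by (induction k) auto

lemma nB_mult: assumes M: "M \<in> carrier_mat n n"
  shows "nB M n k * ([:0,1:] \<cdot>\<^sub>m 1\<^sub>m n - M) = [:0,1:]^k \<cdot>\<^sub>m 1\<^sub>m n - M ^\<^sub>m k"
proof (induction k)
  case 0
  show ?case using M by (intro eq_matI) auto
next
  case (Suc k)
  let ?X = "[:0,1:] :: 'a poly"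
  let ?C = "?X \<cdot>\<^sub>m 1\<^sub>m n - M"
  have B: "nB M n k \<in> carrier_mat n n" using nB_carrier[OF M] .
  have C: "?C \<in> carrier_mat n n" using M by auto
  have Mk: "M ^\<^sub>m k \<in> carrier_mat n n" using M by auto
  have "nB M n (Suc k) * ?C = (?X \<cdot>\<^sub>m nB M n k) * ?C + M ^\<^sub>m k * ?C"
    using B C Mk by (simp add: add_mult_distrib_mat[of _ n n])
  also have "(?X \<cdot>\<^sub>m nB M n k) * ?C = ?X \<cdot>\<^sub>m (nB M n k * ?C)"
    using B C by (simp add: mult_smult_assoc_mat)
  also have "nB M n k * ?C = ?X^k \<cdot>\<^sub>m 1\<^sub>m n - M ^\<^sub>m k" by (rule Suc.IH)
  also have "M ^\<^sub>m k * ?C = M ^\<^sub>m k * (?X \<cdot>\<^sub>m 1\<^sub>m n) - M ^\<^sub>m k * M"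
    by (rule mult_minus_distrib_mat[OF Mk _ M]) (use M in auto)
  also have "M ^\<^sub>m k * M = M ^\<^sub>m Suc k" by simp
  finally show ?case using M Mk
    by (intro eq_matI) (auto simp: algebra_simps)
qed

lemma nilp_char_poly:
  fixes A :: "real mat"
  assumes A: "A \<in> carrier_mat n n" and nil: "A ^\<^sub>m k = 0\<^sub>m n n"
  shows "char_poly A = [:0,1:] ^ n"
proof -
  let ?M = "map_mat (\<lambda>a. [:a:]) A"
  let ?X = "[:0,1:] :: real poly"
  have hom: "semiring_hom (\<lambda>a::real. [:a:])" by unfold_locales (auto simp: one_pCons)
  have M: "?M \<in> carrier_mat n n" using A by auto
  have "?M ^\<^sub>m k = map_mat (\<lambda>a. [:a:]) (A ^\<^sub>m k)"
    using semiring_hom.mat_hom_pow[OF hom A] by simp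
  also have "\<dots> = 0\<^sub>m n n" unfolding nil by (intro eq_matI) auto
  finally have Mk: "?M ^\<^sub>m k = 0\<^sub>m n n" .
  have cpm: "char_poly_matrix A = ?X \<cdot>\<^sub>m 1\<^sub>m n - ?M"
    using A unfolding char_poly_matrix_def by (intro eq_matI) auto
  have eq: "nB ?M n k * char_poly_matrix A = ?X^k \<cdot>\<^sub>m 1\<^sub>m n"
    unfolding cpm nB_mult[OF M] Mk using M by (intro eq_matI) auto
  have "det (nB ?M n k) * char_poly A = det (nB ?M n k * char_poly_matrix A)"
    unfolding char_poly_def using det_mult[OF nB_carrier[OF M] char_poly_matrix_closed[OF A]] by simp
  also have "\<dots> = det (?X^k \<cdot>\<^sub>m 1\<^sub>m n)" unfolding eq ..
  also have "\<dots> = (?X^k)^n" by (simp add: det_smult)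
  finally have "det (nB ?M n k) * char_poly A = (?X^k)^n" .
  then have dv: "char_poly A dvd ?X ^ (k * n)" by (metis dvd_triv_right power_mult)
  have "degree (char_poly A) = n \<and> coeff (char_poly A) n = 1" by (rule degree_monic_char_poly[OF A])
  then show ?thesis using dvd_xpow_monic[OF dv] by simp
qed


definition kmat :: "nat \<Rightarrow> (nat \<Rightarrow> real) \<Rightarrow> (nat \<Rightarrow> real) \<Rightarrow> real mat" where
  "kmat n s w = mat n n (\<lambda>(i,j). (if j = Suc i then s i else 0) + (if i = n - 1 then w j else 0))"

fun cpf :: "nat \<Rightarrow> (nat \<Rightarrow> real) \<Rightarrow> (nat \<Rightarrow> real) \<Rightarrow> real poly" where
  "cpf 0 s w = 1"
| "cpf (Suc n) s w = pCons 0 (cpf n (\<lambda>i. s (Suc i)) (\<lambda>i. w (Suc i))) - [: w 0 * prod s {..<n} :]"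

lemma kmat_carrier[simp]: "kmat n s w \<in> carrier_mat n n" unfolding kmat_def by auto

lemma const_poly_prod: "(\<Prod>i<(n::nat). [: f i :]) = [: \<Prod>i<n. f i :]"
  by (induction n) (auto simp: one_pCons mult.commute)

lemma neg_pow_const: "(-1::real poly)^n * [:(-1)^n * c:] = [:c:]"
proof (induction n arbitrary: c)
  case (Suc n)
  have "(-1::real poly)^Suc n * [:(-1)^Suc n * c:] = (-1)^n * [:(-1)^n * c:]"
    by (simp add: algebra_simps)
  then show ?case using Suc by simp
qed simp

lemma char_poly_kmat: "char_poly (kmat n s w) = cpf n s w"
proof (induction n arbitrary: s w)
  case 0
  show ?case unfolding char_poly_def by (subst det_dim_zero) (auto simp: kmat_def char_poly_matrix_def)
next
  case (Suc n)
  let ?C = "char_poly_matrix (kmat (Suc n) s w)"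
  let ?X = "[:0,1:] :: real poly"
  have C: "?C \<in> carrier_mat (Suc n) (Suc n)" by simp
  have dC: "dim_row ?C = Suc n" "dim_col ?C = Suc n" using C unfolding carrier_mat_def by blast+
  have Cent: "\<And>i j. i < Suc n \<Longrightarrow> j < Suc n \<Longrightarrow> ?C $$ (i,j) =
     (if i = j then ?X else 0) - [: (if j = Suc i then s i else 0) + (if i = n then w j else 0) :]"
    unfolding char_poly_matrix_def kmat_def by auto
  have lap: "det ?C = (\<Sum>i<Suc n. ?C $$ (i,0) * cofactor ?C i 0)"
    by (rule laplace_expansion_column[OF C]) simp
  have d00: "mat_delete ?C 0 0 = char_poly_matrix (kmat n (\<lambda>i. s (Suc i)) (\<lambda>i. w (Suc i)))"
    by (rule eq_matI) (auto simp: mat_delete_def Cent char_poly_matrix_def kmat_def)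
  have cof00: "cofactor ?C 0 0 = cpf n (\<lambda>i. s (Suc i)) (\<lambda>i. w (Suc i))"
    unfolding cofactor_def d00 using Suc.IH[unfolded char_poly_def] by simp
  show ?case
  proof (cases n)
    case 0
    have "det ?C = ?C $$ (0,0) * cofactor ?C 0 0" unfolding lap using 0 by simp
    also have "?C $$ (0,0) = ?X - [: w 0 :]" using Cent[of 0 0] 0 by simp
    also have "cofactor ?C 0 0 = 1" unfolding cof00 using 0 by simp
    finally show ?thesis using 0 unfolding char_poly_def by simp
  next
    case (Suc m)
    let ?D = "mat_delete ?C n 0"
    have D: "?D \<in> carrier_mat n n" using mat_delete_carrier[OF C] by simp
    have dD: "dim_row ?D = n" "dim_col ?D = n" using D unfolding carrier_mat_def by blast+
    have Dent: "\<And>i j. i < n \<Longrightarrow> j < n \<Longrightarrow> ?D $$ (i,j) =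
        (if i = Suc j then ?X else 0) - [: (if j = i then s i else 0) :]"
      unfolding mat_delete_def using dC by (auto simp: Cent)
    have ut: "upper_triangular (?D\<^sup>T)" unfolding upper_triangular_def
    proof (intro allI impI)
      fix i j assume ij: "i < dim_row (?D\<^sup>T)" "j < i"
      then have "i < n" using dC by simp
      from \<open>i < n\<close> show "?D\<^sup>T $$ (i,j) = 0" using Dent[of j i] ij dD by simp
    qed
    have "det ?D = det (?D\<^sup>T)" using det_transpose[OF D] by simp
    also have "\<dots> = prod_list (diag_mat (?D\<^sup>T))" by (rule det_upper_triangular[OF ut]) (use D in simp)
    also have "\<dots> = (\<Prod>i = 0..<n. ?D\<^sup>T $$ (i,i))" unfolding prod_list_diag_prod using dD by simp
    also have "\<dots> = (\<Prod>i<n. [: - s i :])"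
      using Dent dD by (intro prod.cong) auto
    also have "\<dots> = [: \<Prod>i<n. - s i :]" by (rule const_poly_prod)
    also have "(\<Prod>i<n. - s i) = (-1)^n * prod s {..<n}"
      by (simp add: prod_uminus)  
    finally have detD: "det ?D = [: (-1)^n * prod s {..<n} :]" .
    have "det ?C = ?C $$ (0,0) * cofactor ?C 0 0 + ?C $$ (n,0) * cofactor ?C n 0"
    proof -
      have "(\<Sum>i<Suc n. ?C $$ (i,0) * cofactor ?C i 0) = 
            (\<Sum>i<n. ?C $$ (i,0) * cofactor ?C i 0) + ?C $$ (n,0) * cofactor ?C n 0" by simp
      also have "(\<Sum>i<n. ?C $$ (i,0) * cofactor ?C i 0) = ?C $$ (0,0) * cofactor ?C 0 0"
      proof -
        let ?f = "\<lambda>i. ?C $$ (i,0) * cofactor ?C i 0"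
        have "sum ?f {..<Suc m} = ?f 0 + (\<Sum>i<m. ?f (Suc i))" by (rule sum.lessThan_Suc_shift)
        then have e: "sum ?f {..<n} = ?f 0 + (\<Sum>i<m. ?f (Suc i))" unfolding Suc[symmetric] .
        have "\<And>i. i < m \<Longrightarrow> ?C $$ (Suc i, 0) = 0"
        proof -
          fix i assume "i < m"
          then have "Suc i < Suc n" "Suc i \<noteq> n" using Suc by auto
          then show "?C $$ (Suc i, 0) = 0" using Cent[of "Suc i" 0] by simp
        qed
        then have "(\<Sum>i<m. ?f (Suc i)) = 0" by (intro sum.neutral) auto
        then show ?thesis using e by simp
      qed
      finally show ?thesis unfolding lap .
    qed
    also have "?C $$ (0,0) = ?X" using Cent[of 0 0] Suc by simp
    also have "?C $$ (n,0) = - [: w 0 :]" using Cent[of n 0] Suc by simp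
    also have "cofactor ?C n 0 = (-1)^n * [: (-1)^n * prod s {..<n} :]"
      unfolding cofactor_def detD by simp
    finally have "det ?C = ?X * cpf n (\<lambda>i. s (Suc i)) (\<lambda>i. w (Suc i)) - [: w 0 * prod s {..<n} :]"
      unfolding cof00 neg_pow_const by (simp add: algebra_simps)
    then show ?thesis unfolding char_poly_def by simp
  qed
qed
lemma coeff_cpf: "coeff (cpf n s w) j = (if j = n then 1 else if j < n then - (w j * prod s {j..<n-1}) else 0)"
proof (induction n arbitrary: s w j)
  case 0
  then show ?case by (auto simp: coeff_1)
next
  case (Suc n)
  show ?case
  proof (cases j)
    case 0
    then show ?thesis by (simp add: lessThan_atLeast0)
  next
    case (Suc j')
    have "coeff (cpf (Suc n) s w) j = coeff (cpf n (\<lambda>i. s (Suc i)) (\<lambda>i. w (Suc i))) j'"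
      using Suc by simp
    also have "\<dots> = (if j' = n then 1 else if j' < n then - (w (Suc j') * prod (\<lambda>i. s (Suc i)) {j'..<n-1}) else 0)"
      by (rule Suc.IH)
    also have "\<dots> = (if j = Suc n then 1 else if j < Suc n then - (w j * prod s {j..<Suc n-1}) else 0)"
    proof (cases "j' < n")
      case True
      then obtain n' where n': "n = Suc n'" by (cases n) auto
      have "prod (\<lambda>i. s (Suc i)) {j'..<n-1} = prod s {Suc j'..<n}"
        unfolding n' using prod.shift_bounds_Suc_ivl[of s j' n'] by simp
      then show ?thesis using True Suc by simp
    qed (use Suc in auto)
    finally show ?thesis .
  qed
qed

lemma jordan_matrix_zero_entries:
  assumes "\<forall>(k,a)\<in>set n_as. a = (0::real)"
    and "i < sum_list (map fst n_as)" "j < sum_list (map fst n_as)"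
  shows "jordan_matrix n_as $$ (i,j) \<in> (if j = Suc i then {0,1} else {0})"
  using assms
proof (induction n_as arbitrary: i j)
  case Nil
  then show ?case by simp
next
  case (Cons ka rest)
  obtain k a where ka: "ka = (k,a)" by (cases ka)
  have a: "a = 0" using Cons.prems ka by auto
  let ?N = "sum_list (map fst rest)"
  have ij: "i < k + ?N" "j < k + ?N" using Cons.prems ka by auto
  have e: "jordan_matrix (ka # rest) $$ (i,j) =
    (if i < k then if j < k then jordan_block k a $$ (i,j) else 0
     else if j < k then 0 else jordan_matrix rest $$ (i - k, j - k))"
    unfolding ka jordan_matrix_Cons using ij by (subst index_mat_four_block) auto
  show ?case
  proof (cases "i < k")
    case True
    then show ?thesis using e a by auto
  next
    case False
    note iF = this
    show ?thesis
    proof (cases "j < k")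
      case True
      then show ?thesis using e iF by auto
    next
      case False
      have "jordan_matrix rest $$ (i - k, j - k) \<in> (if j - k = Suc (i - k) then {0,1} else {0})"
        using Cons.IH[of "i - k" "j - k"] Cons.prems ij iF False by auto
      moreover have "(j - k = Suc (i - k)) = (j = Suc i)" using iF False by auto
      ultimately show ?thesis using e iF False by auto
    qed
  qed
qed

lemma triple_prod_bound:
  fixes Pm E Qm :: "real mat"
  assumes Pm: "Pm \<in> carrier_mat n n" and E: "E \<in> carrier_mat n n" and Qm: "Qm \<in> carrier_mat n n"
    and Eb: "\<And>a b. a < n \<Longrightarrow> b < n \<Longrightarrow> \<bar>E $$ (a,b)\<bar> \<le> eta"
    and i: "i < n" and j: "j < n"
  shows "\<bar>(Pm * E * Qm) $$ (i,j)\<bar> \<le> eta * ((\<Sum>a<n. \<bar>Pm $$ (i,a)\<bar>) * (\<Sum>b<n. \<bar>Qm $$ (b,j)\<bar>))"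
proof -
  have e: "(Pm * E * Qm) $$ (i,j) = (\<Sum>b<n. (\<Sum>a<n. Pm $$ (i,a) * E $$ (a,b)) * Qm $$ (b,j))"
    using Pm E Qm i j
    by (simp add: scalar_prod_def lessThan_atLeast0 sum_distrib_left sum_distrib_right mult.assoc) (rule sum.swap)
  have "\<bar>(Pm * E * Qm) $$ (i,j)\<bar> \<le> (\<Sum>b<n. \<bar>(\<Sum>a<n. Pm $$ (i,a) * E $$ (a,b)) * Qm $$ (b,j)\<bar>)"
    unfolding e by (rule sum_abs)
  also have "\<dots> \<le> (\<Sum>b<n. (\<Sum>a<n. \<bar>Pm $$ (i,a)\<bar> * eta) * \<bar>Qm $$ (b,j)\<bar>)"
  proof (intro sum_mono)
    fix b assume b: "b \<in> {..<n}"
    have "\<bar>\<Sum>a<n. Pm $$ (i,a) * E $$ (a,b)\<bar> \<le> (\<Sum>a<n. \<bar>Pm $$ (i,a) * E $$ (a,b)\<bar>)" by (rule sum_abs)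
    also have "\<dots> \<le> (\<Sum>a<n. \<bar>Pm $$ (i,a)\<bar> * eta)"
      by (intro sum_mono) (use Eb b in \<open>auto simp: abs_mult intro: mult_left_mono\<close>)
    finally show "\<bar>(\<Sum>a<n. Pm $$ (i,a) * E $$ (a,b)) * Qm $$ (b,j)\<bar> \<le> (\<Sum>a<n. \<bar>Pm $$ (i,a)\<bar> * eta) * \<bar>Qm $$ (b,j)\<bar>"
      by (simp add: abs_mult mult_right_mono)
  qed
  also have "\<dots> = eta * ((\<Sum>a<n. \<bar>Pm $$ (i,a)\<bar>) * (\<Sum>b<n. \<bar>Qm $$ (b,j)\<bar>))"
    by (simp add: sum_distrib_left sum_distrib_right algebra_simps)
  finally show ?thesis .
qed


lemma sgn_perturb:
  fixes a e l :: real
  assumes "\<bar>e\<bar> < \<bar>a\<bar>" "l > 0"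
  shows "sgn (l * (a + e)) = sgn a"
proof -
  have "sgn (a + e) = sgn a" using assms(1) by (cases a "0::real" rule: linorder_cases) (auto simp: sgn_if)
  then show ?thesis using assms(2) by (simp add: sgn_mult)
qed

theorem corollary5p7:
  fixes n :: nat and P :: "int mat"
  assumes "sign_pattern n P"
    and "\<forall>i<n. \<forall>j<n. P $$ (i,j) \<noteq> 0"
    and "\<exists>A \<in> qual_class P. nilpotent_mat A"
  shows "spectrally_arbitrary n P"
proof -
  have Pc: "P \<in> carrier_mat n n" using assms(1) unfolding sign_pattern_def by auto
  obtain A where AQ: "A \<in> qual_class P" and nilA: "nilpotent_mat A" using assms(3) by blast
  have A: "A \<in> carrier_mat n n" using AQ Pc unfolding qual_class_def by auto
  have sgnA: "\<And>i j. i < n \<Longrightarrow> j < n \<Longrightarrow> sgn (A $$ (i,j)) = of_int (P $$ (i,j))"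
    using AQ Pc unfolding qual_class_def by auto
  have Anz: "\<And>i j. i < n \<Longrightarrow> j < n \<Longrightarrow> A $$ (i,j) \<noteq> 0"
    using sgnA assms(2) by fastforce
  obtain k where Ak: "A ^\<^sub>m k = 0\<^sub>m n n" using nilA A unfolding nilpotent_mat_def by auto
  have cpA: "char_poly A = [:0,1:] ^ n" by (rule nilp_char_poly[OF A Ak])
  show ?thesis unfolding spectrally_arbitrary_def
  proof (intro allI impI)
    fix p :: "real poly"
    assume p: "monic p \<and> degree p = n"
    show "\<exists>F\<in>qual_class P. char_poly F = p"
    proof (cases "n = 0")
      case True
      have "char_poly A = 1" using cpA True by simp
      moreover have "p = 1" using p True deg0_monic by auto
      ultimately show ?thesis using AQ by auto
    next
      case False
      then have n0: "n > 0" by simp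
      have "char_poly A = (\<Prod>a \<leftarrow> replicate n (0::real). [:- a, 1:])"
        unfolding cpA by (simp add: prod_list_replicate)
      from jordan_nf_exists[OF A this] obtain n_as where jnf: "jordan_nf A n_as" by blast
      let ?J = "jordan_matrix n_as"
      from jnf have sim: "similar_mat A ?J" unfolding jordan_nf_def by auto
      from similar_matD[OF sim] obtain n' Pm Qm where
        wit: "{A, ?J, Pm, Qm} \<subseteq> carrier_mat n' n'" "Pm * Qm = 1\<^sub>m n'" "Qm * Pm = 1\<^sub>m n'"
             "A = Pm * ?J * Qm" by blast
      have "n' = n" using wit(1) A by auto
      then have J: "?J \<in> carrier_mat n n" and Pm: "Pm \<in> carrier_mat n n" and Qm: "Qm \<in> carrier_mat n n"
        and PQ: "Pm * Qm = 1\<^sub>m n" and QP: "Qm * Pm = 1\<^sub>m n" and AJ: "A = Pm * ?J * Qm" using wit by auto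
      have sumn: "sum_list (map fst n_as) = n" using J by auto
      have a0: "\<forall>(k,a)\<in>set n_as. a = (0::real)"
      proof (intro ballI, clarify)
        fix kk a assume ka: "(kk,a) \<in> set n_as"
        have "kk \<noteq> 0" using jnf ka unfolding jordan_nf_def by force
        have "poly (char_poly A) a = (\<Prod>x\<leftarrow>n_as. (a - snd x) ^ fst x)"
          using jordan_nf_char_poly[OF jnf] by (simp add: poly_prod_list o_def case_prod_beta)
        also have "\<dots> = 0"
        proof -
          have "(a - snd (kk,a)) ^ fst (kk,a) = 0" using \<open>kk \<noteq> 0\<close> by simp
          then have "0 \<in> set (map (\<lambda>x. (a - snd x) ^ fst x) n_as)" using ka by force
          then show ?thesis by (simp add: prod_list_zero_iff)
        qed
        finally have "a ^ n = 0" unfolding cpA by simp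
        then show "a = 0" by simp
      qed
      have Jent: "\<And>i j. i < n \<Longrightarrow> j < n \<Longrightarrow> ?J $$ (i,j) \<in> (if j = Suc i then {0,1} else {0})"
        using jordan_matrix_zero_entries[OF a0] sumn by auto
      define eps where "eps = Min ((\<lambda>(i,j). \<bar>A $$ (i,j)\<bar>) ` ({..<n} \<times> {..<n}))"
      have eps_le: "\<And>i j. i < n \<Longrightarrow> j < n \<Longrightarrow> eps \<le> \<bar>A $$ (i,j)\<bar>"
        unfolding eps_def by (rule Min_le) force+
      have eps_pos: "eps > 0"
        unfolding eps_def using n0 Anz by (subst Min_gr_iff) auto
      define L where "L = (\<Sum>i<n. \<Sum>a<n. \<bar>Pm $$ (i,a)\<bar>) * (\<Sum>b<n. \<Sum>j<n. \<bar>Qm $$ (b,j)\<bar>)"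
      have L0: "L \<ge> 0" unfolding L_def by (intro mult_nonneg_nonneg sum_nonneg) auto
      define eta where "eta = min 1 (eps / (2 * (L + 1)))"
      have eta_pos: "eta > 0" unfolding eta_def using eps_pos L0 by auto
      have eta1: "eta \<le> 1" unfolding eta_def by auto
      have etaL: "eta * L < eps"
      proof -
        have "eta * L \<le> eps / (2 * (L + 1)) * L" unfolding eta_def using L0 by (intro mult_right_mono) auto
        also have "\<dots> < eps" using eps_pos L0 by (simp add: field_simps add_nonneg_pos)
        finally show ?thesis .
      qed
      define Cs where "Cs = (\<Sum>j<n. \<bar>coeff p j\<bar>)"
      have Cs0: "Cs \<ge> 0" unfolding Cs_def by (intro sum_nonneg) auto
      define lam where "lam = (1 + Cs) / eta"
      have lam_pos: "lam > 0" unfolding lam_def using Cs0 eta_pos by auto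
      have lam_eta: "lam * eta = 1 + Cs" unfolding lam_def using eta_pos by simp
      define jd where "jd = (\<lambda>i. if Suc i < n then ?J $$ (i, Suc i) else 0)"
      have jd0: "\<And>i. jd i \<ge> 0"
      proof -
        fix i show "jd i \<ge> 0"
        proof (cases "Suc i < n")
          case True
          then have "?J $$ (i, Suc i) \<in> {0,1}" using Jent[of i "Suc i"] by simp
          then show ?thesis unfolding jd_def using True by auto
        qed (simp add: jd_def)
      qed
      define s where "s = (\<lambda>i. lam * (jd i + eta))"
      have s1: "\<And>i. s i \<ge> 1"
      proof -
        fix i
        have "s i \<ge> lam * eta" unfolding s_def using jd0[of i] lam_pos by (intro mult_left_mono) auto
        then show "s i \<ge> 1" using lam_eta Cs0 by linarith
      qed
      have prod1: "\<And>j. prod s {j..<n-1} \<ge> 1" using s1 by (intro prod_ge_1) auto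
      define w' where "w' = (\<lambda>j. - coeff p j / prod s {j..<n-1})"
      define w where "w = (\<lambda>j. w' j / lam)"
      have wb: "\<And>j. j < n \<Longrightarrow> \<bar>w j\<bar> \<le> eta"
      proof -
        fix j assume j: "j < n"
        have pr: "prod s {j..<n-1} \<ge> 1" by (rule prod1)
        have "\<bar>w j\<bar> = \<bar>coeff p j\<bar> / (prod s {j..<n-1} * lam)"
          unfolding w_def w'_def using pr lam_pos by (simp add: abs_divide abs_mult)
        also have "\<dots> \<le> \<bar>coeff p j\<bar> / lam"
          using pr lam_pos by (intro divide_left_mono) (auto intro: mult_pos_pos)
        also have "\<dots> \<le> eta"
        proof -
          have "\<bar>coeff p j\<bar> \<le> Cs" unfolding Cs_def by (rule member_le_sum) (use j in auto)
          then have "\<bar>coeff p j\<bar> \<le> eta * lam" using lam_eta by (simp add: mult.commute)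
          then show ?thesis using lam_pos by (simp add: divide_le_eq)
        qed
        finally show "\<bar>w j\<bar> \<le> eta" .
      qed
      define E where "E = mat n n (\<lambda>(i,j). (if j = Suc i then eta else 0) + (if i = n - 1 then w j else 0))"
      have Ec: "E \<in> carrier_mat n n" unfolding E_def by auto
      have Eb: "\<And>a b. a < n \<Longrightarrow> b < n \<Longrightarrow> \<bar>E $$ (a,b)\<bar> \<le> eta"
        unfolding E_def using wb eta_pos by auto
      define K where "K = kmat n s w'"
      have KJE: "K = lam \<cdot>\<^sub>m (?J + E)"
      proof (rule eq_matI)
        fix i j assume i: "i < dim_row (lam \<cdot>\<^sub>m (?J + E))" and j: "j < dim_col (lam \<cdot>\<^sub>m (?J + E))"
        then have i: "i < n" and j: "j < n" using J Ec by auto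
        have rhs: "(lam \<cdot>\<^sub>m (?J + E)) $$ (i,j) = lam * (?J $$ (i,j) + E $$ (i,j))"
          using i j J Ec by simp
        have Ee: "E $$ (i,j) = (if j = Suc i then eta else 0) + (if i = n - 1 then w j else 0)"
          unfolding E_def using i j by simp
        have Ke: "K $$ (i,j) = (if j = Suc i then s i else 0) + (if i = n - 1 then w' j else 0)"
          unfolding K_def kmat_def using i j by simp
        have ww: "w' j = lam * w j" unfolding w_def using lam_pos by simp
        show "K $$ (i,j) = (lam \<cdot>\<^sub>m (?J + E)) $$ (i,j)"
        proof (cases "j = Suc i")
          case True
          then have "i \<noteq> n - 1" using j by auto
          moreover have "jd i = ?J $$ (i,j)" unfolding jd_def using True j by simp
          ultimately show ?thesis unfolding rhs Ee Ke s_def using True by (simp add: algebra_simps)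
        next
          case False
          then have "?J $$ (i,j) = 0" using Jent[OF i j] by simp
          then show ?thesis unfolding rhs Ee Ke using False ww by simp
        qed
      qed (use J Ec in \<open>auto simp: K_def kmat_def\<close>)
      define F where "F = Pm * K * Qm"
      have F: "F \<in> carrier_mat n n" unfolding F_def K_def using Pm Qm by auto
      have JE: "?J + E \<in> carrier_mat n n" using J Ec by auto
      have FA: "F = lam \<cdot>\<^sub>m (A + Pm * E * Qm)"
      proof -
        have "F = Pm * (lam \<cdot>\<^sub>m (?J + E)) * Qm" unfolding F_def KJE ..
        also have "Pm * (lam \<cdot>\<^sub>m (?J + E)) = lam \<cdot>\<^sub>m (Pm * (?J + E))"
          by (rule mult_smult_distrib[OF Pm JE])
        also have "(lam \<cdot>\<^sub>m (Pm * (?J + E))) * Qm = lam \<cdot>\<^sub>m (Pm * (?J + E) * Qm)"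
          by (rule mult_smult_assoc_mat[OF mult_carrier_mat[OF Pm JE] Qm])
        also have "Pm * (?J + E) = Pm * ?J + Pm * E" by (rule mult_add_distrib_mat[OF Pm J Ec])
        also have "(Pm * ?J + Pm * E) * Qm = Pm * ?J * Qm + Pm * E * Qm"
          by (rule add_mult_distrib_mat[OF mult_carrier_mat[OF Pm J] mult_carrier_mat[OF Pm Ec] Qm])
        finally show ?thesis unfolding AJ[symmetric] .
      qed
      have "char_poly F = char_poly K"
        by (rule char_poly_similar, rule similar_matI[where n=n and P=Pm and Q=Qm]) (use F Pm Qm PQ QP in \<open>auto simp: K_def F_def\<close>)
      also have "\<dots> = p"
      proof (rule poly_eqI)
        fix j
        have lc: "coeff p n = 1" using p by auto
        have "coeff (char_poly K) j = (if j = n then 1 else if j < n then - (w' j * prod s {j..<n-1}) else 0)"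
          unfolding K_def char_poly_kmat coeff_cpf ..
        also have "\<dots> = coeff p j"
        proof -
          have "j < n \<Longrightarrow> - (w' j * prod s {j..<n-1}) = coeff p j"
          proof -
            have "prod s {j..<n-1} \<noteq> 0" using prod1[of j] by linarith
            then show "- (w' j * prod s {j..<n-1}) = coeff p j" unfolding w'_def by simp
          qed
          moreover have "j > n \<Longrightarrow> coeff p j = 0" using p by (intro coeff_eq_0) auto
          ultimately show ?thesis using lc by auto
        qed
        finally show "coeff (char_poly K) j = coeff p j" .
      qed
      finally have cpF: "char_poly F = p" .
      have "F \<in> qual_class P" unfolding qual_class_def
      proof (intro CollectI conjI allI impI)
        show "F \<in> carrier_mat (dim_row P) (dim_col P)" using F Pc by auto
        fix i j assume "i < dim_row P" "j < dim_col P"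
        then have i: "i < n" and j: "j < n" using Pc by auto
        have Fe: "F $$ (i,j) = lam * (A $$ (i,j) + (Pm * E * Qm) $$ (i,j))"
          unfolding FA using i j A Pm Qm Ec by simp
        have "\<bar>(Pm * E * Qm) $$ (i,j)\<bar> \<le> eta * ((\<Sum>a<n. \<bar>Pm $$ (i,a)\<bar>) * (\<Sum>b<n. \<bar>Qm $$ (b,j)\<bar>))"
          by (rule triple_prod_bound[OF Pm Ec Qm Eb i j])
        also have "\<dots> \<le> eta * L"
        proof -
          have r: "(\<Sum>a<n. \<bar>Pm $$ (i,a)\<bar>) \<le> (\<Sum>i<n. \<Sum>a<n. \<bar>Pm $$ (i,a)\<bar>)"
            by (rule member_le_sum[where f = "\<lambda>i. \<Sum>a<n. \<bar>Pm $$ (i,a)\<bar>"]) (use i in \<open>auto intro: sum_nonneg\<close>)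
          have c: "(\<Sum>b<n. \<bar>Qm $$ (b,j)\<bar>) \<le> (\<Sum>b<n. \<Sum>j<n. \<bar>Qm $$ (b,j)\<bar>)"
            by (intro sum_mono member_le_sum) (use j in auto)
          have "(\<Sum>a<n. \<bar>Pm $$ (i,a)\<bar>) * (\<Sum>b<n. \<bar>Qm $$ (b,j)\<bar>) \<le> L"
            unfolding L_def by (intro mult_mono r c) (auto intro: sum_nonneg)
          then show ?thesis using eta_pos by (intro mult_left_mono) auto
        qed
        also have "\<dots> < eps" by (rule etaL)
        also have "\<dots> \<le> \<bar>A $$ (i,j)\<bar>" by (rule eps_le[OF i j])
        finally have "\<bar>(Pm * E * Qm) $$ (i,j)\<bar> < \<bar>A $$ (i,j)\<bar>" .
        then have "sgn (F $$ (i,j)) = sgn (A $$ (i,j))" unfolding Fe by (rule sgn_perturb[OF _ lam_pos])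
        then show "sgn (F $$ (i,j)) = of_int (P $$ (i,j))" using sgnA[OF i j] by simp
      qed
      then show ?thesis using cpF by blast
    qed
  qed
qed

end
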